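(* Let $n,r\ge 1$ be integers and $t_0\in\mathbb R$. Let $g:\mathbb R\times V\to\mathbb R^r$, $V\subseteq\mathbb R^r$ open, be continuous in $t$ and continuously differentiable in $z\in V$. For $i,j\in[n]$ let $w_{ij}(t,x)$ ($t\in\mathbb R$, $x\in\mathbb R^{nr}$) be continuous in $t$ and continuously differentiable in $x$, and suppose there are $\bar w<\infty$ and a non-negative, integrable, non-increasing function $\psi$ with $$\bar w\ \ge\ \sup_{t\ge t_0}\sup_x\max_{i\ne j}w_{ij}(t,x)\ \ge\ \inf_t w_{ij}(t,x)\ \ge\ \psi(S(x)).$$ Let $(x(t),v(t))$, $t\in[t_0,T)$, be the maximal solution of $$\dot x_i=v_i,\qquad \dot v_i=g(t,v_i)+\sum_{j=1}^n w_{ij}(t,x)(v_j-v_i),\quad t\ge t_0,\qquad x_i(t_0)=x_i^0,\ v_i(t_0)=v_i^0\in\mathbb R^r\ (i\in[n]),$$ and let $K=\sup_{t\in[t_0,T)}\max_{i,i'\in[n],l\in[r]}K(t,l,v_i(t),v_{i'}(t))$. Then for all $t\in[t_0,T)$, $$\frac{d}{dt}S(v(t))\le\big[K-n\psi(S(x(t)))\big]S(v(t)),$$ where $\frac{d}{dt}$ denotes the right-hand Dini derivative.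
   Context: $[k]=\{1,\dots,k\}$. For $y=(y_1,\dots,y_n)\in\mathbb R^{nr}$ with $y_i=(y_i^{(1)},\dots,y_i^{(r)})$, $S(y)=\max_{l\in[r]}\max_{i,j}|y_i^{(l)}-y_j^{(l)}|$. For $t\in\mathbb R$, $l\in[r]$, $y,w\in\mathbb R^r$, $$K(t,l,y,w)=\int_0^1\frac{\partial g^{(l)}}{\partial z^{(l)}}(t,qy+(1-q)w)\,dq+\sum_{h\ne l}\Big|\int_0^1\frac{\partial g^{(l)}}{\partial z^{(h)}}(t,qy+(1-q)w)\,dq\Big|.$$ *)

theory Defs
  imports "HOL-Analysis.Analysis"
begin

text \<open>Agents are indexed by a finite type 'n (so n = CARD('n) \<ge> 1), coordinates by a
finite type 'r (so r = CARD('r) \<ge> 1). A point of R^(nr) is a y :: real^'r^'n with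
y$i$l = y_i^(l).\<close>

definition S :: "real^'r::finite^'n::finite \<Rightarrow> real" where
  "S y = Max {\<bar>y$i$l - y$j$l\<bar> | i j l. True}"

text \<open>Partial derivative dg^(l)/dz^(h)(t,z) read off the Frechet derivative Dg t z of g t at z.\<close>
definition Kfun :: "(real \<Rightarrow> real^'r::finite \<Rightarrow> ((real^'r) \<Rightarrow>\<^sub>L (real^'r))) \<Rightarrow> real \<Rightarrow> 'r \<Rightarrow>
    real^'r \<Rightarrow> real^'r \<Rightarrow> real" where
  "Kfun Dg t l y w =
     integral {0..1} (\<lambda>q. (blinfun_apply (Dg t (q *\<^sub>R y + (1 - q) *\<^sub>R w)) (axis l 1)) $ l)
     + (\<Sum>h\<in>UNIV - {l}.
         \<bar>integral {0..1} (\<lambda>q. (blinfun_apply (Dg t (q *\<^sub>R y + (1 - q) *\<^sub>R w)) (axis h 1)) $ l)\<bar>)"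

definition is_solution ::
  "(real^'r::finite) set \<Rightarrow> (real \<Rightarrow> real^'r \<Rightarrow> real^'r) \<Rightarrow> (real \<Rightarrow> real^'r^'n::finite \<Rightarrow> 'n \<Rightarrow> 'n \<Rightarrow> real)
   \<Rightarrow> real \<Rightarrow> real^'r^'n \<Rightarrow> real^'r^'n \<Rightarrow> ereal
   \<Rightarrow> (real \<Rightarrow> real^'r^'n) \<Rightarrow> (real \<Rightarrow> real^'r^'n) \<Rightarrow> bool" where
  "is_solution V g w t0 x0 v0 T x v \<longleftrightarrow>
     ereal t0 < T \<and> x t0 = x0 \<and> v t0 = v0 \<and>
     (\<forall>t. t0 \<le> t \<and> ereal t < T \<longrightarrow>
        (\<forall>i. v t $ i \<in> V) \<and>
        (x has_vector_derivative v t) (at t within {t0..}) \<and>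
        (v has_vector_derivative
            (\<chi> i. g t (v t $ i) + (\<Sum>j\<in>UNIV. w t (x t) i j *\<^sub>R (v t $ j - v t $ i))))
          (at t within {t0..}))"

definition is_maximal_solution ::
  "(real^'r::finite) set \<Rightarrow> (real \<Rightarrow> real^'r \<Rightarrow> real^'r) \<Rightarrow> (real \<Rightarrow> real^'r^'n::finite \<Rightarrow> 'n \<Rightarrow> 'n \<Rightarrow> real)
   \<Rightarrow> real \<Rightarrow> real^'r^'n \<Rightarrow> real^'r^'n \<Rightarrow> ereal
   \<Rightarrow> (real \<Rightarrow> real^'r^'n) \<Rightarrow> (real \<Rightarrow> real^'r^'n) \<Rightarrow> bool" where
  "is_maximal_solution V g w t0 x0 v0 T x v \<longleftrightarrow>
     is_solution V g w t0 x0 v0 T x v \<and>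
     (\<forall>T' x' v'. is_solution V g w t0 x0 v0 T' x' v' \<and> T \<le> T' \<and>
        (\<forall>t. t0 \<le> t \<and> ereal t < T \<longrightarrow> x' t = x t \<and> v' t = v t) \<longrightarrow> T' = T)"

definition dini_right :: "(real \<Rightarrow> real) \<Rightarrow> real \<Rightarrow> ereal" where
  "dini_right f t = Limsup (at_right t) (\<lambda>s. ereal ((f s - f t) / (s - t)))"

end

theory Submission
  imports Defs
begin

lemma S_alt: "S y = Max ((\<lambda>(i,j,l). \<bar>y$i$l - y$j$l\<bar>) ` UNIV)"
proof -
  have "{\<bar>y$i$l - y$j$l\<bar> | i j l. True} = (\<lambda>(i,j,l). \<bar>y$i$l - y$j$l\<bar>) ` UNIV"
  proof (intro set_eqI iffI)
    fix z assume "z \<in> {\<bar>y$i$l - y$j$l\<bar> | i j l. True}"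
    then obtain i j l where "z = \<bar>y$i$l - y$j$l\<bar>" by auto
    then show "z \<in> (\<lambda>(i,j,l). \<bar>y$i$l - y$j$l\<bar>) ` UNIV" by (intro image_eqI[of _ _ "(i,j,l)"]) auto
  qed auto
  then show ?thesis unfolding S_def by simp
qed
lemma S_ge: "\<bar>y$i$l - y$j$l\<bar> \<le> S y"
  unfolding S_alt by (rule Max_ge) (auto intro!: image_eqI[of _ _ "(i,j,l)"])
lemma S_le: assumes "\<And>i j l. y$i$l - y$j$l \<le> B" shows "S y \<le> B"
  unfolding S_alt
proof (subst Max_le_iff)
  show "\<forall>a\<in>(\<lambda>(i,j,l). \<bar>y$i$l - y$j$l\<bar>) ` UNIV. a \<le> B"
    using assms by (auto simp: abs_le_iff)
qed auto
lemma S_att: "\<exists>i j l. y$i$l - y$j$l = S y"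
proof -
  have "S y \<in> (\<lambda>(i,j,l). \<bar>y$i$l - y$j$l\<bar>) ` UNIV" unfolding S_alt by (rule Max_in) auto
  then obtain i j l where "S y = \<bar>y$i$l - y$j$l\<bar>" by auto
  then show ?thesis by (cases "y$i$l - y$j$l \<ge> 0") auto
qed
lemma S_nonneg: "0 \<le> S y" using S_ge[of y i l i] by auto


lemma vec_basis_expand: "(\<Sum>h\<in>UNIV. (y $ h) *\<^sub>R axis h (1::real)) = (y :: real^'r::finite)"
  by (simp add: vec_eq_iff sum_component axis_def if_distrib cong: if_cong)

lemma g_bound:
  fixes g :: "real^'r::finite \<Rightarrow> real^'r" and Dg :: "real \<Rightarrow> real^'r \<Rightarrow> ((real^'r) \<Rightarrow>\<^sub>L (real^'r))"
  assumes gd: "\<And>z. z \<in> V \<Longrightarrow> (g has_derivative blinfun_apply (Dg t z)) (at z)"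
    and gc: "continuous_on V (Dg t)"
    and sg: "closed_segment w y \<subseteq> V"
    and eq: "y $ l - w $ l = F" and le: "\<And>h. \<bar>y $ h - w $ h\<bar> \<le> F"
  shows "g y $ l - g w $ l \<le> Kfun Dg t l y w * F"
proof -
  define \<gamma> where "\<gamma> q = q *\<^sub>R y + (1 - q) *\<^sub>R w" for q :: real
  have \<gamma>V: "\<gamma> q \<in> V" if "q \<in> {0..1}" for q
  proof -
    have "\<gamma> q \<in> closed_segment w y"
      using that unfolding closed_segment_def \<gamma>_def by (auto intro!: exI[of _ q] simp: algebra_simps)
    then show ?thesis using sg by auto
  qed
  have d\<gamma>: "(\<gamma> has_vector_derivative (y - w)) (at q within {0..1})" for q
    unfolding \<gamma>_def by (auto intro!: derivative_eq_intros simp: algebra_simps)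
  have dg\<gamma>: "((g \<circ> \<gamma>) has_vector_derivative blinfun_apply (Dg t (\<gamma> q)) (y - w)) (at q within {0..1})"
    if "q \<in> {0..1}" for q
  proof -
    have "(g has_derivative blinfun_apply (Dg t (\<gamma> q))) (at (\<gamma> q) within \<gamma> ` {0..1})"
      using gd[OF \<gamma>V[OF that]] by (rule has_derivative_at_withinI)
    from diff_chain_within[OF d\<gamma>[unfolded has_vector_derivative_def] this]
    show ?thesis unfolding has_vector_derivative_def
      by (simp add: o_def blinfun.scaleR_right)
  qed
  have "((\<lambda>q. blinfun_apply (Dg t (\<gamma> q)) (y - w)) has_integral (g \<circ> \<gamma>) 1 - (g \<circ> \<gamma>) 0) {0..1}"
    using dg\<gamma> by (intro fundamental_theorem_of_calculus) (auto simp: o_def)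
  then have "((\<lambda>q. blinfun_apply (Dg t (\<gamma> q)) (y - w)) has_integral g y - g w) {0..1}"
    by (simp add: \<gamma>_def)
  from has_integral_linear[OF this bounded_linear_vec_nth[of l]]
  have I1: "((\<lambda>q. blinfun_apply (Dg t (\<gamma> q)) (y - w) $ l) has_integral g y $ l - g w $ l) {0..1}"
    by (simp add: o_def)
  define I where "I h = integral {0..1} (\<lambda>q. blinfun_apply (Dg t (\<gamma> q)) (axis h 1) $ l)" for h
  have cont: "continuous_on {0..1} (\<lambda>q. blinfun_apply (Dg t (\<gamma> q)) (axis h 1) $ l)" for h
  proof -
    have "continuous_on {0..1} \<gamma>" unfolding \<gamma>_def by (intro continuous_intros)
    moreover have "\<gamma> ` {0..1} \<subseteq> V" using \<gamma>V by auto
    ultimately have "continuous_on {0..1} (Dg t \<circ> \<gamma>)"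
      by (intro continuous_on_compose continuous_on_subset[OF gc])
    then show ?thesis by (intro continuous_intros) (simp add: o_def)
  qed
  have "((\<lambda>q. \<Sum>h\<in>UNIV. (y - w) $ h * (blinfun_apply (Dg t (\<gamma> q)) (axis h 1) $ l))
          has_integral (\<Sum>h\<in>UNIV. (y - w) $ h * I h)) {0..1}"
    unfolding I_def
    by (intro has_integral_sum has_integral_mult_right integrable_integral
          integrable_continuous_real cont) auto
  moreover have "blinfun_apply (Dg t (\<gamma> q)) (y - w) $ l
       = (\<Sum>h\<in>UNIV. (y - w) $ h * (blinfun_apply (Dg t (\<gamma> q)) (axis h 1) $ l))" for q
  proof -
    have "blinfun_apply (Dg t (\<gamma> q)) (y - w)
        = blinfun_apply (Dg t (\<gamma> q)) (\<Sum>h\<in>UNIV. ((y - w) $ h) *\<^sub>R axis h 1)"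
      by (simp only: vec_basis_expand)
    also have "\<dots> = (\<Sum>h\<in>UNIV. ((y - w) $ h) *\<^sub>R blinfun_apply (Dg t (\<gamma> q)) (axis h 1))"
      by (simp add: blinfun.sum_right blinfun.scaleR_right)
    finally show ?thesis by (simp add: sum_component)
  qed
  ultimately have "((\<lambda>q. blinfun_apply (Dg t (\<gamma> q)) (y - w) $ l)
          has_integral (\<Sum>h\<in>UNIV. (y - w) $ h * I h)) {0..1}" by simp
  with I1 have geq: "g y $ l - g w $ l = (\<Sum>h\<in>UNIV. (y - w) $ h * I h)"
    using has_integral_unique by blast
  have K: "Kfun Dg t l y w = I l + (\<Sum>h\<in>UNIV - {l}. \<bar>I h\<bar>)"
    unfolding Kfun_def I_def \<gamma>_def by simp
  have "(\<Sum>h\<in>UNIV. (y - w) $ h * I h) = F * I l + (\<Sum>h\<in>UNIV - {l}. (y - w) $ h * I h)"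
    using eq by (simp add: sum.remove[of UNIV l])
  also have "\<dots> \<le> F * I l + (\<Sum>h\<in>UNIV - {l}. F * \<bar>I h\<bar>)"
  proof -
    have "(y - w) $ h * I h \<le> F * \<bar>I h\<bar>" for h
    proof -
      have "(y - w) $ h * I h \<le> \<bar>(y - w) $ h\<bar> * \<bar>I h\<bar>"
        by (metis abs_ge_self abs_mult)
      also have "\<dots> \<le> F * \<bar>I h\<bar>" using le[of h] by (intro mult_right_mono) auto
      finally show ?thesis .
    qed
    then show ?thesis by (intro add_left_mono sum_mono) auto
  qed
  also have "\<dots> = Kfun Dg t l y w * F" by (simp add: K algebra_simps sum_distrib_left)
  finally show ?thesis using geq by simp
qed

lemma dini_max:
  fixes f :: "'a::finite \<Rightarrow> real \<Rightarrow> real" and F :: "real \<Rightarrow> real"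
  assumes der: "\<And>a. (f a has_real_derivative d a) (at_right t)"
    and Fle: "\<And>s B. (\<And>a. f a s \<le> B) \<Longrightarrow> F s \<le> B"
    and fle: "\<And>a. f a t \<le> F t"
    and act: "\<And>a. f a t = F t \<Longrightarrow> d a \<le> c"
  shows "Limsup (at_right t) (\<lambda>s. ereal ((F s - F t)/(s - t))) \<le> ereal c"
proof (rule ereal_le_epsilon2)
  fix e :: real assume e: "0 < e"
  have ev: "\<forall>\<^sub>F s in at_right t. f a s - F t \<le> (c + e) * (s - t)" for a
  proof (cases "f a t = F t")
    case True
    have "((\<lambda>s. (f a s - f a t) / (s - t)) \<longlongrightarrow> d a) (at_right t)"
      using der[of a] by (simp add: has_field_derivative_iff)
    moreover have "d a < c + e" using act[OF True] e by simp
    ultimately have "\<forall>\<^sub>F s in at_right t. (f a s - f a t) / (s - t) < c + e"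
      by (rule order_tendstoD)
    then show ?thesis using eventually_at_right_less[of t]
    proof (eventually_elim)
      case (elim s)
      then have "f a s - f a t < (c + e) * (s - t)" by (simp add: divide_less_eq)
      then show ?case using True by simp
    qed
  next
    case False
    with fle[of a] have lt: "f a t - F t < 0" by simp
    have "continuous (at_right t) (f a)" using der[of a] by (rule DERIV_continuous)
    then have "((\<lambda>s. f a s - F t - (c + e) * (s - t)) \<longlongrightarrow> f a t - F t - (c + e) * (t - t)) (at_right t)"
      by (intro tendsto_intros) (auto simp: continuous_within)
    then have "\<forall>\<^sub>F s in at_right t. f a s - F t - (c + e) * (s - t) < 0"
      using lt by (intro order_tendstoD) auto
    then show ?thesis by eventually_elim simp
  qed
  have evall: "\<forall>\<^sub>F s in at_right t. \<forall>a. f a s - F t \<le> (c + e) * (s - t)"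
    by (rule eventually_all_finite) (rule ev)
  have "\<forall>\<^sub>F s in at_right t. (F s - F t) / (s - t) \<le> c + e"
    using evall eventually_at_right_less[of t]
  proof eventually_elim
    case (elim s)
    then have "F s \<le> F t + (c + e) * (s - t)" by (intro Fle) (auto simp: algebra_simps)
    with elim show ?case by (simp add: divide_le_eq algebra_simps)
  qed
  then have "Limsup (at_right t) (\<lambda>s. ereal ((F s - F t)/(s - t))) \<le> ereal (c + e)"
    by (intro Limsup_bounded) (auto elim: eventually_mono)
  then show "Limsup (at_right t) (\<lambda>s. ereal ((F s - F t)/(s - t))) \<le> ereal c + ereal e" by simp
qed




theorem lemma1:
  fixes V :: "(real^'r::finite) set"
    and g :: "real \<Rightarrow> real^'r \<Rightarrow> real^'r"
    and Dg :: "real \<Rightarrow> real^'r \<Rightarrow> ((real^'r) \<Rightarrow>\<^sub>L (real^'r))"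
    and w :: "real \<Rightarrow> real^'r^'n::finite \<Rightarrow> 'n \<Rightarrow> 'n \<Rightarrow> real"
    and Dw :: "real \<Rightarrow> real^'r^'n \<Rightarrow> 'n \<Rightarrow> 'n \<Rightarrow> ((real^'r^'n) \<Rightarrow>\<^sub>L real)"
    and \<psi> :: "real \<Rightarrow> real"
    and t0 wbar :: real and T :: ereal
    and x0 v0 :: "real^'r^'n"
    and x v :: "real \<Rightarrow> real^'r^'n"
  assumes V_open: "open V"
    and g_cont_t: "\<And>z. z \<in> V \<Longrightarrow> continuous_on UNIV (\<lambda>t. g t z)"
    and g_deriv: "\<And>t z. z \<in> V \<Longrightarrow> (g t has_derivative blinfun_apply (Dg t z)) (at z)"
    and g_deriv_cont: "\<And>t. continuous_on V (Dg t)"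
    and w_cont_t: "\<And>x i j. continuous_on UNIV (\<lambda>t. w t x i j)"
    and w_deriv: "\<And>t x i j. ((\<lambda>y. w t y i j) has_derivative blinfun_apply (Dw t x i j)) (at x)"
    and w_deriv_cont: "\<And>t i j. continuous_on UNIV (\<lambda>x. Dw t x i j)"
    and w_upper: "\<And>t x i j. t \<ge> t0 \<Longrightarrow> i \<noteq> j \<Longrightarrow> w t x i j \<le> wbar"
    and w_lower: "\<And>t x i j. i \<noteq> j \<Longrightarrow> \<psi> (S x) \<le> w t x i j"
    and psi_nonneg: "\<And>s. 0 \<le> s \<Longrightarrow> 0 \<le> \<psi> s"
    and psi_integrable: "\<psi> integrable_on {0..}"
    and psi_noninc: "\<And>a b. 0 \<le> a \<Longrightarrow> a \<le> b \<Longrightarrow> \<psi> b \<le> \<psi> a"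
    and sol: "is_maximal_solution V g w t0 x0 v0 T x v"
    and seg: "\<And>t i i'. t0 \<le> t \<Longrightarrow> ereal t < T \<Longrightarrow> closed_segment (v t $ i) (v t $ i') \<subseteq> V"
    and K_bdd: "bdd_above {Kfun Dg t l (v t $ i) (v t $ i') | t i i' l. t0 \<le> t \<and> ereal t < T}"
  shows "\<forall>t. t0 \<le> t \<and> ereal t < T \<longrightarrow>
           dini_right (\<lambda>s. S (v s)) t
             \<le> ereal ((Sup {Kfun Dg t l (v t $ i) (v t $ i') | t i i' l. t0 \<le> t \<and> ereal t < T}
                        - real CARD('n) * \<psi> (S (x t))) * S (v t))"
  proof (intro allI impI)
  fix t assume t: "t0 \<le> t \<and> ereal t < T"
  have solt: "is_solution V g w t0 x0 v0 T x v" using sol unfolding is_maximal_solution_def by blast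
  define Vd where "Vd = (\<chi> i. g t (v t $ i) + (\<Sum>j\<in>UNIV. w t (x t) i j *\<^sub>R (v t $ j - v t $ i)))"
  have vin: "\<And>i. v t $ i \<in> V" and vder: "(v has_vector_derivative Vd) (at t within {t0..})"
    using solt t unfolding is_solution_def Vd_def by auto
  define Ks where "Ks = Sup {Kfun Dg t l (v t $ i) (v t $ i') | t i i' l. t0 \<le> t \<and> ereal t < T}"
  define ps where "ps = \<psi> (S (x t))"
  have ps0: "0 \<le> ps" unfolding ps_def by (rule psi_nonneg[OF S_nonneg])
  define F where "F s = S (v s)" for s
  define f where "f a s = (case a of (i,j,l) \<Rightarrow> v s $ i $ l - v s $ j $ l)" for a :: "'n \<times> 'n \<times> 'r" and s
  define d where "d a = (case a of (i,j,l) \<Rightarrow> Vd $ i $ l - Vd $ j $ l)" for a :: "'n \<times> 'n \<times> 'r"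
  have der: "(f a has_real_derivative d a) (at_right t)" for a
  proof -
    obtain i j l where a: "a = (i,j,l)" by (cases a) auto
    have bl: "bounded_linear (\<lambda>z::real^'r^'n. z $ i $ l - z $ j $ l)"
      by (intro bounded_linear_sub bounded_linear_compose[OF bounded_linear_vec_nth] bounded_linear_vec_nth)
    have "(v has_vector_derivative Vd) (at t within {t<..})"
      by (rule has_vector_derivative_within_subset[OF vder]) (use t in auto)
    from bounded_linear.has_vector_derivative[OF bl this]
    show ?thesis unfolding a f_def d_def
      by (simp add: has_real_derivative_iff_has_vector_derivative)
  qed
  have "Limsup (at_right t) (\<lambda>s. ereal ((F s - F t)/(s - t))) \<le> ereal ((Ks - real CARD('n) * ps) * S (v t))"
  proof (rule dini_max[where f=f and d=d, OF der])
    fix s B assume "\<And>a. f a s \<le> B"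
    note h = this
    show "F s \<le> B" unfolding F_def
    proof (rule S_le)
      fix i j l show "v s $ i $ l - v s $ j $ l \<le> B" using h[of "(i,j,l)"] by (simp add: f_def)
    qed
  next
    fix a :: "'n \<times> 'n \<times> 'r"
    obtain i j l where a: "a = (i,j,l)" by (cases a) auto
    show "f a t \<le> F t" using S_ge[of "v t" i l j] by (simp add: a f_def F_def abs_le_iff)
  next
    fix a :: "'n \<times> 'n \<times> 'r" assume act: "f a t = F t"
    obtain i j l where a: "a = (i,j,l)" by (cases a) auto
    define Fv where "Fv = S (v t)"
    have eq: "v t $ i $ l - v t $ j $ l = Fv" using act unfolding a f_def F_def Fv_def by simp
    have Fv0: "0 \<le> Fv" unfolding Fv_def by (rule S_nonneg)
    have le: "\<bar>v t $ i $ h - v t $ j $ h\<bar> \<le> Fv" for h unfolding Fv_def by (rule S_ge)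
    have maxi: "v t $ k $ l \<le> v t $ i $ l" for k
      using S_ge[of "v t" k l j] eq unfolding Fv_def by auto
    have minj: "v t $ j $ l \<le> v t $ k $ l" for k
      using S_ge[of "v t" i l k] eq unfolding Fv_def by auto
    have gb: "g t (v t $ i) $ l - g t (v t $ j) $ l \<le> Kfun Dg t l (v t $ i) (v t $ j) * Fv"
      using g_deriv g_deriv_cont seg[of t j i] t eq le by (intro g_bound[where V=V]) auto
    have "Kfun Dg t l (v t $ i) (v t $ j) \<le> Ks"
      unfolding Ks_def using t by (intro cSup_upper K_bdd) blast
    then have gb2: "g t (v t $ i) $ l - g t (v t $ j) $ l \<le> Ks * Fv"
      using gb Fv0 by (meson mult_right_mono order_trans)
    have c1: "w t (x t) i k * (v t $ k $ l - v t $ i $ l) \<le> ps * (v t $ k $ l - v t $ i $ l)" for k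
    proof (cases "k = i")
      case False
      then have "ps \<le> w t (x t) i k" unfolding ps_def using w_lower by metis
      then show ?thesis using maxi[of k] by (intro mult_right_mono_neg) auto
    qed simp
    have c2: "- (w t (x t) j k * (v t $ k $ l - v t $ j $ l)) \<le> - (ps * (v t $ k $ l - v t $ j $ l))" for k
    proof (cases "k = j")
      case False
      then have "ps \<le> w t (x t) j k" unfolding ps_def using w_lower by metis
      then show ?thesis using minj[of k] by (intro le_imp_neg_le mult_right_mono) auto
    qed simp
    have "(\<Sum>k\<in>UNIV. w t (x t) i k * (v t $ k $ l - v t $ i $ l)) - (\<Sum>k\<in>UNIV. w t (x t) j k * (v t $ k $ l - v t $ j $ l))
        = (\<Sum>k\<in>UNIV. w t (x t) i k * (v t $ k $ l - v t $ i $ l) - w t (x t) j k * (v t $ k $ l - v t $ j $ l))"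
      by (simp add: sum_subtractf)
    also have "\<dots> \<le> (\<Sum>k\<in>UNIV. ps * (v t $ k $ l - v t $ i $ l) - ps * (v t $ k $ l - v t $ j $ l))"
      using c1 c2 by (intro sum_mono) (smt (verit))
    also have "\<dots> = - (real CARD('n) * ps * Fv)"
      using eq by (simp add: algebra_simps)
    finally have cb: "(\<Sum>k\<in>UNIV. w t (x t) i k * (v t $ k $ l - v t $ i $ l)) - (\<Sum>k\<in>UNIV. w t (x t) j k * (v t $ k $ l - v t $ j $ l))
        \<le> - (real CARD('n) * ps * Fv)" .
    have "d a = (g t (v t $ i) $ l - g t (v t $ j) $ l) +
        ((\<Sum>k\<in>UNIV. w t (x t) i k * (v t $ k $ l - v t $ i $ l)) - (\<Sum>k\<in>UNIV. w t (x t) j k * (v t $ k $ l - v t $ j $ l)))"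
      unfolding a d_def Vd_def by (simp add: sum_component)
    also have "\<dots> \<le> Ks * Fv - real CARD('n) * ps * Fv" using gb2 cb by linarith
    finally show "d a \<le> (Ks - real CARD('n) * ps) * S (v t)" by (simp add: Fv_def algebra_simps)
  qed
  then show "dini_right (\<lambda>s. S (v s)) t \<le> ereal ((Sup {Kfun Dg t l (v t $ i) (v t $ i') | t i i' l. t0 \<le> t \<and> ereal t < T} - real CARD('n) * \<psi> (S (x t))) * S (v t))"
    unfolding dini_right_def Ks_def ps_def F_def .
qed

end
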